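(* Let $\Bbbk$ be a field and $\mathcal{C}$ an additive pivotal $\Bbbk$-category in which every indecomposable object is absolutely indecomposable and every element of the radical of the endomorphism ring of an indecomposable object is nilpotent. Let $V$ be an absolutely simple object of $\mathcal{C}$, and fix a decomposition $V\otimes V^*=\bigoplus_{k\in I}W_k$ into indecomposable objects, with inclusions $i_k:W_k\to V\otimes V^*$, projections $p_k:V\otimes V^*\to W_k$ ($p_ki_k=\mathrm{Id}_{W_k}$), and idempotents $e_k=i_kp_k$ (pairwise orthogonal, summing to $\mathrm{Id}_{V\otimes V^*}$). Then there is a unique $j\in I$ satisfying the following equivalent conditions: (1) $e_j\,\mathrm{coev}_V=\mathrm{coev}_V$; (2) $\operatorname{Hom}_{\mathcal{C}}(\mathbb{1},W_j)$ is non-zero and is spanned by $p_j\,\mathrm{coev}_V$. There is also a unique $j'\in I$ satisfying the following equivalent conditions: (1') $\widetilde{\mathrm{ev}}_V\,e_{j'}=\widetilde{\mathrm{ev}}_V$; (2') $\operatorname{Hom}_{\mathcal{C}}(W_{j'},\mathbb{1})$ is non-zero and is spanned by $\widetilde{\mathrm{ev}}_V\, i_{j'}$.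
   Context: A (strict) tensor category $\mathcal{C}$ with unit $\mathbb{1}$ has a left duality if each object $V$ has an object $V^*$ and morphisms $\mathrm{coev}_V:\mathbb{1}\to V\otimes V^*$, $\mathrm{ev}_V:V^*\otimes V\to\mathbb{1}$ satisfying the zig-zag identities; a right duality consists of morphisms $\widetilde{\mathrm{coev}}_V:\mathbb{1}\to V^*\otimes V$, $\widetilde{\mathrm{ev}}_V:V\otimes V^*\to\mathbb{1}$ satisfying the analogous zig-zag identities. A pivotal category is a tensor category with compatible left and right dualities (same dual objects, same dual morphisms $f^*$, same isomorphisms $W^*\otimes V^*\cong (V\otimes W)^*$). A tensor $\Bbbk$-category is a tensor category whose hom-sets are $\Bbbk$-modules, with composition and tensor product bilinear, and $\operatorname{End}(\mathbb{1})$ free of rank one (identified with $\Bbbk$). An object $V$ is absolutely simple if $\operatorname{End}_{\mathcal{C}}(V)$ is free of rank one over $\Bbbk$ (i.e. $\Bbbk\to\operatorname{End}(V)$, $k\mapsto k\,\mathrm{Id}_V$ is an isomorphism), and absolutely indecomposable if $\operatorname{End}_{\mathcal{C}}(V)/\operatorname{Rad}(\operatorname{End}_{\mathcal{C}}(V))\cong\Bbbk$. *)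

theory Defs
  imports Main
begin

text \<open>A strict pivotal tensor category with linear (over a field) hom-sets,
  encoded concretely: objects of type 'o, morphisms of type 'm, scalars of type 'k.
  Composition: cmp g f means g after f.\<close>

record ('o, 'm, 'k) pkcat =
  Obj   :: "'o set"
  Arr   :: "'m set"
  dom   :: "'m \<Rightarrow> 'o"
  cod   :: "'m \<Rightarrow> 'o"
  cmp   :: "'m \<Rightarrow> 'm \<Rightarrow> 'm"
  idm   :: "'o \<Rightarrow> 'm"
  otens :: "'o \<Rightarrow> 'o \<Rightarrow> 'o"
  mtens :: "'m \<Rightarrow> 'm \<Rightarrow> 'm"
  unit  :: "'o"
  dual  :: "'o \<Rightarrow> 'o"
  coev  :: "'o \<Rightarrow> 'm"
  ev    :: "'o \<Rightarrow> 'm"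
  coevt :: "'o \<Rightarrow> 'm"
  evt   :: "'o \<Rightarrow> 'm"
  madd  :: "'m \<Rightarrow> 'm \<Rightarrow> 'm"
  msmult :: "'k \<Rightarrow> 'm \<Rightarrow> 'm"
  mzero :: "'o \<Rightarrow> 'o \<Rightarrow> 'm"

definition Hom :: "('o, 'm, 'k) pkcat \<Rightarrow> 'o \<Rightarrow> 'o \<Rightarrow> 'm set" where
  "Hom C a b = {f \<in> Arr C. dom C f = a \<and> cod C f = b}"

abbreviation End :: "('o, 'm, 'k) pkcat \<Rightarrow> 'o \<Rightarrow> 'm set" where
  "End C a \<equiv> Hom C a a"

definition is_category :: "('o, 'm, 'k) pkcat \<Rightarrow> bool" where
  "is_category C \<longleftrightarrow>
     (\<forall>f \<in> Arr C. dom C f \<in> Obj C \<and> cod C f \<in> Obj C) \<and>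
     (\<forall>a \<in> Obj C. idm C a \<in> Hom C a a) \<and>
     (\<forall>a \<in> Obj C. \<forall>b \<in> Obj C. \<forall>c \<in> Obj C. \<forall>f \<in> Hom C a b. \<forall>g \<in> Hom C b c.
        cmp C g f \<in> Hom C a c) \<and>
     (\<forall>a \<in> Obj C. \<forall>b \<in> Obj C. \<forall>f \<in> Hom C a b.
        cmp C (idm C b) f = f \<and> cmp C f (idm C a) = f) \<and>
     (\<forall>a \<in> Obj C. \<forall>b \<in> Obj C. \<forall>c \<in> Obj C. \<forall>d \<in> Obj C.
      \<forall>f \<in> Hom C a b. \<forall>g \<in> Hom C b c. \<forall>h \<in> Hom C c d.
        cmp C h (cmp C g f) = cmp C (cmp C h g) f)"

definition is_strict_tensor :: "('o, 'm, 'k) pkcat \<Rightarrow> bool" where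
  "is_strict_tensor C \<longleftrightarrow>
     unit C \<in> Obj C \<and>
     (\<forall>a \<in> Obj C. \<forall>b \<in> Obj C. otens C a b \<in> Obj C) \<and>
     (\<forall>a \<in> Obj C. \<forall>b \<in> Obj C. \<forall>c \<in> Obj C. \<forall>d \<in> Obj C.
      \<forall>f \<in> Hom C a b. \<forall>g \<in> Hom C c d.
        mtens C f g \<in> Hom C (otens C a c) (otens C b d)) \<and>
     (\<forall>a \<in> Obj C. \<forall>b \<in> Obj C. mtens C (idm C a) (idm C b) = idm C (otens C a b)) \<and>
     (\<forall>a \<in> Obj C. \<forall>b \<in> Obj C. \<forall>c \<in> Obj C. \<forall>a' \<in> Obj C. \<forall>b' \<in> Obj C. \<forall>c' \<in> Obj C.
      \<forall>f \<in> Hom C a b. \<forall>g \<in> Hom C b c. \<forall>f' \<in> Hom C a' b'. \<forall>g' \<in> Hom C b' c'.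
        mtens C (cmp C g f) (cmp C g' f') = cmp C (mtens C g g') (mtens C f f')) \<and>
     (\<forall>a \<in> Obj C. \<forall>b \<in> Obj C. \<forall>c \<in> Obj C.
        otens C (otens C a b) c = otens C a (otens C b c)) \<and>
     (\<forall>a \<in> Obj C. otens C (unit C) a = a \<and> otens C a (unit C) = a) \<and>
     (\<forall>f \<in> Arr C. \<forall>g \<in> Arr C. \<forall>h \<in> Arr C.
        mtens C (mtens C f g) h = mtens C f (mtens C g h)) \<and>
     (\<forall>f \<in> Arr C. mtens C (idm C (unit C)) f = f \<and> mtens C f (idm C (unit C)) = f)"

definition has_left_duality :: "('o, 'm, 'k) pkcat \<Rightarrow> bool" where
  "has_left_duality C \<longleftrightarrow>
     (\<forall>V \<in> Obj C. dual C V \<in> Obj C \<and>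
        coev C V \<in> Hom C (unit C) (otens C V (dual C V)) \<and>
        ev C V \<in> Hom C (otens C (dual C V) V) (unit C) \<and>
        cmp C (mtens C (idm C V) (ev C V)) (mtens C (coev C V) (idm C V)) = idm C V \<and>
        cmp C (mtens C (ev C V) (idm C (dual C V))) (mtens C (idm C (dual C V)) (coev C V))
          = idm C (dual C V))"

definition has_right_duality :: "('o, 'm, 'k) pkcat \<Rightarrow> bool" where
  "has_right_duality C \<longleftrightarrow>
     (\<forall>V \<in> Obj C. dual C V \<in> Obj C \<and>
        coevt C V \<in> Hom C (unit C) (otens C (dual C V) V) \<and>
        evt C V \<in> Hom C (otens C V (dual C V)) (unit C) \<and>
        cmp C (mtens C (evt C V) (idm C V)) (mtens C (idm C V) (coevt C V)) = idm C V \<and>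
        cmp C (mtens C (idm C (dual C V)) (evt C V)) (mtens C (coevt C V) (idm C (dual C V)))
          = idm C (dual C V))"

definition ldual_mor :: "('o, 'm, 'k) pkcat \<Rightarrow> 'o \<Rightarrow> 'o \<Rightarrow> 'm \<Rightarrow> 'm" where
  "ldual_mor C V W f =
     cmp C (mtens C (ev C W) (idm C (dual C V)))
       (cmp C (mtens C (mtens C (idm C (dual C W)) f) (idm C (dual C V)))
              (mtens C (idm C (dual C W)) (coev C V)))"

definition rdual_mor :: "('o, 'm, 'k) pkcat \<Rightarrow> 'o \<Rightarrow> 'o \<Rightarrow> 'm \<Rightarrow> 'm" where
  "rdual_mor C V W f =
     cmp C (mtens C (idm C (dual C V)) (evt C W))
       (cmp C (mtens C (mtens C (idm C (dual C V)) f) (idm C (dual C W)))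
              (mtens C (coevt C V) (idm C (dual C W))))"

text \<open>Canonical isomorphisms W^* \<otimes> V^* \<rightarrow> (V \<otimes> W)^* from the left, resp. right, duality.\<close>
definition lgamma :: "('o, 'm, 'k) pkcat \<Rightarrow> 'o \<Rightarrow> 'o \<Rightarrow> 'm" where
  "lgamma C V W =
     cmp C (mtens C (ev C W) (idm C (dual C (otens C V W))))
       (cmp C (mtens C (mtens C (idm C (dual C W)) (ev C V))
                       (idm C (otens C W (dual C (otens C V W)))))
              (mtens C (idm C (otens C (dual C W) (dual C V))) (coev C (otens C V W))))"

definition rgamma :: "('o, 'm, 'k) pkcat \<Rightarrow> 'o \<Rightarrow> 'o \<Rightarrow> 'm" where
  "rgamma C V W =
     cmp C (mtens C (idm C (dual C (otens C V W))) (evt C V))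
       (cmp C (mtens C (mtens C (idm C (otens C (dual C (otens C V W)) V)) (evt C W))
                       (idm C (dual C V)))
              (mtens C (coevt C (otens C V W)) (idm C (otens C (dual C W) (dual C V)))))"

definition is_pivotal :: "('o, 'm, 'k) pkcat \<Rightarrow> bool" where
  "is_pivotal C \<longleftrightarrow> is_category C \<and> is_strict_tensor C \<and>
     has_left_duality C \<and> has_right_duality C \<and>
     (\<forall>V \<in> Obj C. \<forall>W \<in> Obj C. \<forall>f \<in> Hom C V W. ldual_mor C V W f = rdual_mor C V W f) \<and>
     (\<forall>V \<in> Obj C. \<forall>W \<in> Obj C. lgamma C V W = rgamma C V W)"

text \<open>Linearity over the field 'k: hom-sets are 'k-vector spaces, composition and
  tensor product are bilinear, and End(1) is free of rank one (identified with 'k).\<close>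
definition is_linear :: "('o, 'm, 'k::field) pkcat \<Rightarrow> bool" where
  "is_linear C \<longleftrightarrow>
     (\<forall>a \<in> Obj C. \<forall>b \<in> Obj C.
        mzero C a b \<in> Hom C a b \<and>
        (\<forall>f \<in> Hom C a b. \<forall>g \<in> Hom C a b. madd C f g \<in> Hom C a b) \<and>
        (\<forall>c. \<forall>f \<in> Hom C a b. msmult C c f \<in> Hom C a b) \<and>
        (\<forall>f \<in> Hom C a b. \<forall>g \<in> Hom C a b. \<forall>h \<in> Hom C a b.
           madd C (madd C f g) h = madd C f (madd C g h)) \<and>
        (\<forall>f \<in> Hom C a b. \<forall>g \<in> Hom C a b. madd C f g = madd C g f) \<and>
        (\<forall>f \<in> Hom C a b. madd C f (mzero C a b) = f) \<and>
        (\<forall>f \<in> Hom C a b. \<exists>g \<in> Hom C a b. madd C f g = mzero C a b) \<and>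
        (\<forall>c d. \<forall>f \<in> Hom C a b. msmult C (c + d) f = madd C (msmult C c f) (msmult C d f)) \<and>
        (\<forall>c. \<forall>f \<in> Hom C a b. \<forall>g \<in> Hom C a b.
           msmult C c (madd C f g) = madd C (msmult C c f) (msmult C c g)) \<and>
        (\<forall>c d. \<forall>f \<in> Hom C a b. msmult C (c * d) f = msmult C c (msmult C d f)) \<and>
        (\<forall>f \<in> Hom C a b. msmult C 1 f = f)) \<and>
     (\<forall>a \<in> Obj C. \<forall>b \<in> Obj C. \<forall>c \<in> Obj C.
      \<forall>f \<in> Hom C a b. \<forall>f' \<in> Hom C a b. \<forall>g \<in> Hom C b c. \<forall>g' \<in> Hom C b c. \<forall>s.
        cmp C (madd C g g') f = madd C (cmp C g f) (cmp C g' f) \<and>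
        cmp C g (madd C f f') = madd C (cmp C g f) (cmp C g f') \<and>
        cmp C (msmult C s g) f = msmult C s (cmp C g f) \<and>
        cmp C g (msmult C s f) = msmult C s (cmp C g f)) \<and>
     (\<forall>a \<in> Obj C. \<forall>b \<in> Obj C. \<forall>c \<in> Obj C. \<forall>d \<in> Obj C.
      \<forall>f \<in> Hom C a b. \<forall>f' \<in> Hom C a b. \<forall>g \<in> Hom C c d. \<forall>g' \<in> Hom C c d. \<forall>s.
        mtens C (madd C f f') g = madd C (mtens C f g) (mtens C f' g) \<and>
        mtens C f (madd C g g') = madd C (mtens C f g) (mtens C f g') \<and>
        mtens C (msmult C s f) g = msmult C s (mtens C f g) \<and>
        mtens C f (msmult C s g) = msmult C s (mtens C f g)) \<and>
     bij_betw (\<lambda>s. msmult C s (idm C (unit C))) UNIV (Hom C (unit C) (unit C))"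

definition is_zero_obj :: "('o, 'm, 'k) pkcat \<Rightarrow> 'o \<Rightarrow> bool" where
  "is_zero_obj C a \<longleftrightarrow> a \<in> Obj C \<and> idm C a = mzero C a a"

definition is_biproduct ::
  "('o, 'm, 'k) pkcat \<Rightarrow> 'o \<Rightarrow> 'o \<Rightarrow> 'o \<Rightarrow> 'm \<Rightarrow> 'm \<Rightarrow> 'm \<Rightarrow> 'm \<Rightarrow> bool" where
  "is_biproduct C S A B iA iB pA pB \<longleftrightarrow>
     S \<in> Obj C \<and> A \<in> Obj C \<and> B \<in> Obj C \<and>
     iA \<in> Hom C A S \<and> iB \<in> Hom C B S \<and> pA \<in> Hom C S A \<and> pB \<in> Hom C S B \<and>
     cmp C pA iA = idm C A \<and> cmp C pB iB = idm C B \<and>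
     cmp C pA iB = mzero C B A \<and> cmp C pB iA = mzero C A B \<and>
     madd C (cmp C iA pA) (cmp C iB pB) = idm C S"

definition is_additive :: "('o, 'm, 'k) pkcat \<Rightarrow> bool" where
  "is_additive C \<longleftrightarrow>
     (\<exists>z. is_zero_obj C z) \<and>
     (\<forall>A \<in> Obj C. \<forall>B \<in> Obj C. \<exists>S iA iB pA pB. is_biproduct C S A B iA iB pA pB)"

definition additive_pivotal_kcat :: "('o, 'm, 'k::field) pkcat \<Rightarrow> bool" where
  "additive_pivotal_kcat C \<longleftrightarrow> is_pivotal C \<and> is_linear C \<and> is_additive C"

definition indecomposable :: "('o, 'm, 'k) pkcat \<Rightarrow> 'o \<Rightarrow> bool" where
  "indecomposable C V \<longleftrightarrow> V \<in> Obj C \<and> \<not> is_zero_obj C V \<and>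
     (\<forall>A B iA iB pA pB. is_biproduct C V A B iA iB pA pB \<longrightarrow>
        is_zero_obj C A \<or> is_zero_obj C B)"

definition left_ideal :: "('o, 'm, 'k) pkcat \<Rightarrow> 'o \<Rightarrow> 'm set \<Rightarrow> bool" where
  "left_ideal C V L \<longleftrightarrow> L \<subseteq> End C V \<and> mzero C V V \<in> L \<and>
     (\<forall>x \<in> L. \<forall>y \<in> L. madd C x y \<in> L) \<and>
     (\<forall>r \<in> End C V. \<forall>x \<in> L. cmp C r x \<in> L)"

definition maximal_left_ideal :: "('o, 'm, 'k) pkcat \<Rightarrow> 'o \<Rightarrow> 'm set \<Rightarrow> bool" where
  "maximal_left_ideal C V L \<longleftrightarrow> left_ideal C V L \<and> L \<noteq> End C V \<and>
     (\<forall>L'. left_ideal C V L' \<and> L \<subseteq> L' \<and> L' \<noteq> End C V \<longrightarrow> L' = L)"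

definition Rad :: "('o, 'm, 'k) pkcat \<Rightarrow> 'o \<Rightarrow> 'm set" where
  "Rad C V = End C V \<inter> \<Inter> {L. maximal_left_ideal C V L}"

text \<open>End(V)/Rad(End(V)) \<cong> 'k as 'k-algebras, i.e. the structure map
  s \<mapsto> s \<cdot> Id_V + Rad is bijective onto the quotient.\<close>
definition abs_indecomposable :: "('o, 'm, 'k::field) pkcat \<Rightarrow> 'o \<Rightarrow> bool" where
  "abs_indecomposable C V \<longleftrightarrow> V \<in> Obj C \<and>
     (\<forall>f \<in> End C V. \<exists>s. \<exists>r \<in> Rad C V. f = madd C (msmult C s (idm C V)) r) \<and>
     (\<forall>s. msmult C s (idm C V) \<in> Rad C V \<longrightarrow> s = 0)"

definition abs_simple :: "('o, 'm, 'k) pkcat \<Rightarrow> 'o \<Rightarrow> bool" where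
  "abs_simple C V \<longleftrightarrow> V \<in> Obj C \<and>
     bij_betw (\<lambda>s. msmult C s (idm C V)) UNIV (End C V)"

fun mpow :: "('o, 'm, 'k) pkcat \<Rightarrow> 'o \<Rightarrow> 'm \<Rightarrow> nat \<Rightarrow> 'm" where
  "mpow C V f 0 = idm C V"
| "mpow C V f (Suc n) = cmp C f (mpow C V f n)"

definition nilpotent_end :: "('o, 'm, 'k) pkcat \<Rightarrow> 'o \<Rightarrow> 'm \<Rightarrow> bool" where
  "nilpotent_end C V f \<longleftrightarrow> (\<exists>n. mpow C V f n = mzero C V V)"

fun hsum :: "('o, 'm, 'k) pkcat \<Rightarrow> 'o \<Rightarrow> 'o \<Rightarrow> (nat \<Rightarrow> 'm) \<Rightarrow> nat \<Rightarrow> 'm" where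
  "hsum C a b f 0 = mzero C a b"
| "hsum C a b f (Suc n) = madd C (hsum C a b f n) (f n)"

end

theory Submission
  imports Defs
begin


locale apk = fixes C :: "('o,'m,'k::field) pkcat"
  assumes apk: "additive_pivotal_kcat C"
begin

lemma cat: "is_category C" and st: "is_strict_tensor C" and ld: "has_left_duality C"
  and rd: "has_right_duality C" and lin: "is_linear C"
  using apk by (auto simp: additive_pivotal_kcat_def is_pivotal_def)

lemmas catc = cat[unfolded is_category_def]
lemmas stc = st[unfolded is_strict_tensor_def]
lemmas linc = lin[unfolded is_linear_def]
lemmas ldc = ld[unfolded has_left_duality_def]
lemmas rdc = rd[unfolded has_right_duality_def]

lemmas cat1 = catc[THEN conjunct1]
lemmas cat2 = catc[THEN conjunct2, THEN conjunct1]
lemmas cat3 = catc[THEN conjunct2, THEN conjunct2, THEN conjunct1]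
lemmas cat4 = catc[THEN conjunct2, THEN conjunct2, THEN conjunct2, THEN conjunct1]
lemmas cat5 = catc[THEN conjunct2, THEN conjunct2, THEN conjunct2, THEN conjunct2]
lemmas st1 = stc[THEN conjunct1]
lemmas st2 = stc[THEN conjunct2, THEN conjunct1]
lemmas st3 = stc[THEN conjunct2, THEN conjunct2, THEN conjunct1]
lemmas st4 = stc[THEN conjunct2, THEN conjunct2, THEN conjunct2, THEN conjunct1]
lemmas st5 = stc[THEN conjunct2, THEN conjunct2, THEN conjunct2, THEN conjunct2, THEN conjunct1]
lemmas st6 = stc[THEN conjunct2, THEN conjunct2, THEN conjunct2, THEN conjunct2, THEN conjunct2, THEN conjunct1]
lemmas st7 = stc[THEN conjunct2, THEN conjunct2, THEN conjunct2, THEN conjunct2, THEN conjunct2, THEN conjunct2, THEN conjunct1]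
lemmas st8 = stc[THEN conjunct2, THEN conjunct2, THEN conjunct2, THEN conjunct2, THEN conjunct2, THEN conjunct2, THEN conjunct2, THEN conjunct1]
lemmas st9 = stc[THEN conjunct2, THEN conjunct2, THEN conjunct2, THEN conjunct2, THEN conjunct2, THEN conjunct2, THEN conjunct2, THEN conjunct2]
lemmas lin1 = linc[THEN conjunct1]
lemmas lin2 = linc[THEN conjunct2, THEN conjunct1]
lemmas lin3 = linc[THEN conjunct2, THEN conjunct2, THEN conjunct1]

lemma homD: "f \<in> Hom C a b \<Longrightarrow> f \<in> Arr C \<and> dom C f = a \<and> cod C f = b" by (simp add: Hom_def)

lemma hom_obj: "f \<in> Hom C a b \<Longrightarrow> a \<in> Obj C \<and> b \<in> Obj C"
  using cat1 unfolding Hom_def by blast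

lemma id_hom: "a \<in> Obj C \<Longrightarrow> idm C a \<in> Hom C a a"
  using cat2 by blast

lemma comp_hom: "f \<in> Hom C a b \<Longrightarrow> g \<in> Hom C b c \<Longrightarrow> cmp C g f \<in> Hom C a c"
  using cat3 hom_obj by blast

lemma id_l: "f \<in> Hom C a b \<Longrightarrow> cmp C (idm C b) f = f"
  using cat4 hom_obj by blast

lemma id_r: "f \<in> Hom C a b \<Longrightarrow> cmp C f (idm C a) = f"
  using cat4 hom_obj by blast

lemma assoc: "f \<in> Hom C a b \<Longrightarrow> g \<in> Hom C b c \<Longrightarrow> h \<in> Hom C c d \<Longrightarrow>
   cmp C h (cmp C g f) = cmp C (cmp C h g) f"
proof -
  assume a: "f \<in> Hom C a b" "g \<in> Hom C b c" "h \<in> Hom C c d"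
  then have "a \<in> Obj C" "b \<in> Obj C" "c \<in> Obj C" "d \<in> Obj C" using hom_obj by blast+
  then show ?thesis using cat5 a by blast
qed

lemma unit_obj: "unit C \<in> Obj C" using st1 .

lemma otens_obj: "a \<in> Obj C \<Longrightarrow> b \<in> Obj C \<Longrightarrow> otens C a b \<in> Obj C"
  using st2 by blast

lemma tens_hom: "f \<in> Hom C a b \<Longrightarrow> g \<in> Hom C c d \<Longrightarrow> mtens C f g \<in> Hom C (otens C a c) (otens C b d)"
proof -
  assume a: "f \<in> Hom C a b" "g \<in> Hom C c d"
  then have "a \<in> Obj C" "b \<in> Obj C" "c \<in> Obj C" "d \<in> Obj C" using hom_obj by blast+
  then show ?thesis using st3 a by blast
qed

lemma tens_id: "a \<in> Obj C \<Longrightarrow> b \<in> Obj C \<Longrightarrow> mtens C (idm C a) (idm C b) = idm C (otens C a b)"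
  using st4 by blast

lemma interchange: "f \<in> Hom C a b \<Longrightarrow> g \<in> Hom C b c \<Longrightarrow> f' \<in> Hom C a' b' \<Longrightarrow> g' \<in> Hom C b' c' \<Longrightarrow>
   mtens C (cmp C g f) (cmp C g' f') = cmp C (mtens C g g') (mtens C f f')"
proof -
  assume a: "f \<in> Hom C a b" "g \<in> Hom C b c" "f' \<in> Hom C a' b'" "g' \<in> Hom C b' c'"
  have o: "a \<in> Obj C" "b \<in> Obj C" "c \<in> Obj C" "a' \<in> Obj C" "b' \<in> Obj C" "c' \<in> Obj C"
    using a hom_obj by blast+
  show ?thesis using st5 a o by blast
qed

lemma otens_assoc: "a \<in> Obj C \<Longrightarrow> b \<in> Obj C \<Longrightarrow> c \<in> Obj C \<Longrightarrow>
   otens C (otens C a b) c = otens C a (otens C b c)"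
  using st6 by blast

lemma otens_unit_l: "a \<in> Obj C \<Longrightarrow> otens C (unit C) a = a"
  using st7 by blast
lemma otens_unit_r: "a \<in> Obj C \<Longrightarrow> otens C a (unit C) = a"
  using st7 by blast

lemma mtens_assoc: "f \<in> Hom C a b \<Longrightarrow> g \<in> Hom C c d \<Longrightarrow> h \<in> Hom C e e' \<Longrightarrow>
   mtens C (mtens C f g) h = mtens C f (mtens C g h)"
  using st8 homD by blast

lemma mtens_unit_l: "f \<in> Hom C a b \<Longrightarrow> mtens C (idm C (unit C)) f = f"
  using st9 homD by blast
lemma mtens_unit_r: "f \<in> Hom C a b \<Longrightarrow> mtens C f (idm C (unit C)) = f"
  using st9 homD by blast

lemma dual_obj: "V \<in> Obj C \<Longrightarrow> dual C V \<in> Obj C"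
  using ldc by blast
lemma coev_hom: "V \<in> Obj C \<Longrightarrow> coev C V \<in> Hom C (unit C) (otens C V (dual C V))"
  using ldc by blast
lemma ev_hom: "V \<in> Obj C \<Longrightarrow> ev C V \<in> Hom C (otens C (dual C V) V) (unit C)"
  using ldc by blast
lemma zz1: "V \<in> Obj C \<Longrightarrow> cmp C (mtens C (idm C V) (ev C V)) (mtens C (coev C V) (idm C V)) = idm C V"
  using ldc by blast
lemma zz2: "V \<in> Obj C \<Longrightarrow> cmp C (mtens C (ev C V) (idm C (dual C V))) (mtens C (idm C (dual C V)) (coev C V))
          = idm C (dual C V)"
  using ldc by blast
lemma coevt_hom: "V \<in> Obj C \<Longrightarrow> coevt C V \<in> Hom C (unit C) (otens C (dual C V) V)"
  using rdc by blast
lemma evt_hom: "V \<in> Obj C \<Longrightarrow> evt C V \<in> Hom C (otens C V (dual C V)) (unit C)"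
  using rdc by blast
lemma zzt1: "V \<in> Obj C \<Longrightarrow> cmp C (mtens C (evt C V) (idm C V)) (mtens C (idm C V) (coevt C V)) = idm C V"
  using rdc by blast
lemma zzt2: "V \<in> Obj C \<Longrightarrow> cmp C (mtens C (idm C (dual C V)) (evt C V)) (mtens C (coevt C V) (idm C (dual C V)))
          = idm C (dual C V)"
  using rdc by blast

lemma lin1': "f \<in> Hom C a b \<Longrightarrow>
        mzero C a b \<in> Hom C a b \<and>
        (\<forall>f \<in> Hom C a b. \<forall>g \<in> Hom C a b. madd C f g \<in> Hom C a b) \<and>
        (\<forall>c. \<forall>f \<in> Hom C a b. msmult C c f \<in> Hom C a b) \<and>
        (\<forall>f \<in> Hom C a b. \<forall>g \<in> Hom C a b. \<forall>h \<in> Hom C a b.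
           madd C (madd C f g) h = madd C f (madd C g h)) \<and>
        (\<forall>f \<in> Hom C a b. \<forall>g \<in> Hom C a b. madd C f g = madd C g f) \<and>
        (\<forall>f \<in> Hom C a b. madd C f (mzero C a b) = f) \<and>
        (\<forall>f \<in> Hom C a b. \<exists>g \<in> Hom C a b. madd C f g = mzero C a b) \<and>
        (\<forall>c d. \<forall>f \<in> Hom C a b. msmult C (c + d) f = madd C (msmult C c f) (msmult C d f)) \<and>
        (\<forall>c. \<forall>f \<in> Hom C a b. \<forall>g \<in> Hom C a b.
           msmult C c (madd C f g) = madd C (msmult C c f) (msmult C c g)) \<and>
        (\<forall>c d. \<forall>f \<in> Hom C a b. msmult C (c * d) f = msmult C c (msmult C d f)) \<and>
        (\<forall>f \<in> Hom C a b. msmult C 1 f = f)"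
proof -
  assume "f \<in> Hom C a b"
  then have "a \<in> Obj C" "b \<in> Obj C" using hom_obj by blast+
  then show ?thesis by (rule bspec[OF bspec[OF lin1]])
qed

lemma zero_hom: "a \<in> Obj C \<Longrightarrow> b \<in> Obj C \<Longrightarrow> mzero C a b \<in> Hom C a b"
proof -
  assume A: "a \<in> Obj C" and B: "b \<in> Obj C"
  have "\<forall>b\<in>Obj C. mzero C a b \<in> Hom C a b" using lin1 A by blast
  then show ?thesis using B by blast
qed
lemma add_hom: assumes f: "f \<in> Hom C a b" and g: "g \<in> Hom C a b" shows "madd C f g \<in> Hom C a b" using lin1'[OF f, THEN conjunct2, THEN conjunct1] f g by blast
lemma smult_hom: assumes f: "f \<in> Hom C a b" shows "msmult C s f \<in> Hom C a b" using lin1'[OF f, THEN conjunct2, THEN conjunct2, THEN conjunct1] f by blast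
lemma add_assoc: assumes f: "f \<in> Hom C a b" and g: "g \<in> Hom C a b" and h: "h \<in> Hom C a b" shows
   "madd C (madd C f g) h = madd C f (madd C g h)" using lin1'[OF f, THEN conjunct2, THEN conjunct2, THEN conjunct2, THEN conjunct1] f g h by blast
lemma add_zero: assumes f: "f \<in> Hom C a b" shows "madd C f (mzero C a b) = f" using lin1'[OF f, THEN conjunct2, THEN conjunct2, THEN conjunct2, THEN conjunct2, THEN conjunct2, THEN conjunct1] f by blast
lemma add_inv: assumes f: "f \<in> Hom C a b" shows "\<exists>g \<in> Hom C a b. madd C f g = mzero C a b" using lin1'[OF f, THEN conjunct2, THEN conjunct2, THEN conjunct2, THEN conjunct2, THEN conjunct2, THEN conjunct2, THEN conjunct1] f by blast
lemma smult_plus: assumes f: "f \<in> Hom C a b" shows "msmult C (c + d) f = madd C (msmult C c f) (msmult C d f)"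
  using lin1'[OF f, THEN conjunct2, THEN conjunct2, THEN conjunct2, THEN conjunct2, THEN conjunct2, THEN conjunct2, THEN conjunct2, THEN conjunct1] f by blast
lemma smult_mult: assumes f: "f \<in> Hom C a b" shows "msmult C (c * d) f = msmult C c (msmult C d f)"
  using lin1'[OF f, THEN conjunct2, THEN conjunct2, THEN conjunct2, THEN conjunct2, THEN conjunct2, THEN conjunct2, THEN conjunct2, THEN conjunct2, THEN conjunct2, THEN conjunct1] f by blast
lemma smult_one: assumes f: "f \<in> Hom C a b" shows "msmult C 1 f = f" using lin1'[OF f, THEN conjunct2, THEN conjunct2, THEN conjunct2, THEN conjunct2, THEN conjunct2, THEN conjunct2, THEN conjunct2, THEN conjunct2, THEN conjunct2, THEN conjunct2] f by blast

lemma lin2': "f \<in> Hom C a b \<Longrightarrow> f' \<in> Hom C a b \<Longrightarrow> g \<in> Hom C b c \<Longrightarrow> g' \<in> Hom C b c \<Longrightarrow>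
        cmp C (madd C g g') f = madd C (cmp C g f) (cmp C g' f) \<and>
        cmp C g (madd C f f') = madd C (cmp C g f) (cmp C g f') \<and>
        cmp C (msmult C s g) f = msmult C s (cmp C g f) \<and>
        cmp C g (msmult C s f) = msmult C s (cmp C g f)"
proof -
  assume a: "f \<in> Hom C a b" "f' \<in> Hom C a b" "g \<in> Hom C b c" "g' \<in> Hom C b c"
  then have "a \<in> Obj C" "b \<in> Obj C" "c \<in> Obj C" using hom_obj by blast+
  then show ?thesis using lin2 a by blast
qed

lemma comp_addl: "f \<in> Hom C a b \<Longrightarrow> g \<in> Hom C b c \<Longrightarrow> g' \<in> Hom C b c \<Longrightarrow>
   cmp C (madd C g g') f = madd C (cmp C g f) (cmp C g' f)" using lin2' by blast
lemma comp_smultl: "f \<in> Hom C a b \<Longrightarrow> g \<in> Hom C b c \<Longrightarrow>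
   cmp C (msmult C s g) f = msmult C s (cmp C g f)" using lin2' by blast
lemma comp_smultr: "f \<in> Hom C a b \<Longrightarrow> g \<in> Hom C b c \<Longrightarrow>
   cmp C g (msmult C s f) = msmult C s (cmp C g f)" using lin2' by blast

lemma tens_smultl: "f \<in> Hom C a b \<Longrightarrow> g \<in> Hom C c d \<Longrightarrow>
   mtens C (msmult C s f) g = msmult C s (mtens C f g)"
proof -
  assume a: "f \<in> Hom C a b" "g \<in> Hom C c d"
  then have "a \<in> Obj C" "b \<in> Obj C" "c \<in> Obj C" "d \<in> Obj C" using hom_obj by blast+
  then show ?thesis using lin3 a by blast
qed

lemma smult_zero: "f \<in> Hom C a b \<Longrightarrow> msmult C 0 f = mzero C a b"
proof -
  assume f: "f \<in> Hom C a b"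
  define x where "x = msmult C 0 f"
  have x: "x \<in> Hom C a b" using f smult_hom x_def by blast
  have xx: "madd C x x = x" using smult_plus[OF f, of 0 0] x_def by simp
  obtain g where g: "g \<in> Hom C a b" "madd C x g = mzero C a b" using add_inv[OF x] by blast
  have "x = madd C x (madd C x g)" using g add_zero[OF x] by simp
  also have "\<dots> = madd C (madd C x x) g" using add_assoc[OF x x g(1)] by simp
  also have "\<dots> = mzero C a b" using xx g by simp
  finally show ?thesis using x_def by simp
qed

lemma smult_inj: assumes f: "f \<in> Hom C a b" and nz: "f \<noteq> msmult C 0 f"
  and eq: "msmult C s f = msmult C t f" shows "s = t"
proof (rule ccontr)
  assume st: "s \<noteq> t"
  have "msmult C (s - t) f = madd C (msmult C s f) (msmult C (- t) f)"
    using smult_plus[OF f, of s "-t"] by simp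
  also have "\<dots> = madd C (msmult C t f) (msmult C (- t) f)" using eq by simp
  also have "\<dots> = msmult C 0 f" using smult_plus[OF f, of t "-t"] by simp
  finally have z: "msmult C (s - t) f = msmult C 0 f" .
  have "f = msmult C (inverse (s - t) * (s - t)) f" using st smult_one[OF f] by simp
  also have "\<dots> = msmult C (inverse (s - t)) (msmult C 0 f)" using smult_mult[OF f] z by simp
  also have "\<dots> = msmult C 0 f" using smult_mult[OF f, symmetric] by simp
  finally show False using nz by simp
qed

end


context apk begin

lemma absV_obj: "abs_simple C V \<Longrightarrow> V \<in> Obj C" by (simp add: abs_simple_def)
lemma absV_surj: "abs_simple C V \<Longrightarrow> h \<in> Hom C V V \<Longrightarrow> \<exists>s. h = msmult C s (idm C V)"
  unfolding abs_simple_def bij_betw_def by blast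
lemma absV_inj: "abs_simple C V \<Longrightarrow> msmult C s (idm C V) = msmult C t (idm C V) \<Longrightarrow> s = t"
  unfolding abs_simple_def bij_betw_def inj_on_def by blast

lemma absV_nz: assumes V: "abs_simple C V" shows "idm C V \<noteq> msmult C 0 (idm C V)"
proof
  assume a: "idm C V = msmult C 0 (idm C V)"
  have "msmult C 1 (idm C V) = msmult C 0 (idm C V)"
    using a smult_one[OF id_hom[OF absV_obj[OF V]]] by simp
  then have "(1::'k) = 0" using absV_inj[OF V] by blast
  then show False by simp
qed

lemma coev_rep: assumes V: "abs_simple C V"
  and f: "f \<in> Hom C (unit C) (otens C V (dual C V))"
  shows "\<exists>s. f = msmult C s (coev C V)"
proof -
  let ?D = "dual C V" let ?X = "otens C V (dual C V)" let ?U = "unit C"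
  have VO: "V \<in> Obj C" using absV_obj[OF V] .
  have DO: "?D \<in> Obj C" using dual_obj[OF VO] .
  have UO: "?U \<in> Obj C" by (rule unit_obj)
  have XO: "?X \<in> Obj C" using otens_obj[OF VO DO] .
  have IV: "idm C V \<in> Hom C V V" using id_hom[OF VO] .
  have ID: "idm C ?D \<in> Hom C ?D ?D" using id_hom[OF DO] .
  have IX: "idm C ?X \<in> Hom C ?X ?X" using id_hom[OF XO] .
  have IU: "idm C ?U \<in> Hom C ?U ?U" using id_hom[OF UO] .
  have ev: "ev C V \<in> Hom C (otens C ?D V) ?U" using ev_hom[OF VO] .
  have co: "coev C V \<in> Hom C ?U ?X" using coev_hom[OF VO] .
  note simps = otens_assoc otens_unit_l otens_unit_r VO DO UO XO otens_obj
  have A: "mtens C (idm C V) (ev C V) \<in> Hom C (otens C V (otens C ?D V)) V"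
    using tens_hom[OF IV ev] by (simp add: simps)
  have B: "mtens C f (idm C V) \<in> Hom C V (otens C V (otens C ?D V))"
    using tens_hom[OF f IV] by (simp add: simps)
  define h where "h = cmp C (mtens C (idm C V) (ev C V)) (mtens C f (idm C V))"
  have h: "h \<in> Hom C V V" unfolding h_def using comp_hom[OF B A] .
  obtain s where s: "h = msmult C s (idm C V)" using absV_surj[OF V h] by blast
  have "cmp C (mtens C h (idm C ?D)) (coev C V) = cmp C (mtens C (msmult C s (idm C V)) (idm C ?D)) (coev C V)"
    using s by simp
  also have "\<dots> = cmp C (msmult C s (idm C ?X)) (coev C V)"
    using tens_smultl[OF IV ID] tens_id[OF VO DO] by simp
  also have "\<dots> = msmult C s (coev C V)"
    using comp_smultl[OF co IX] id_l[OF co] by simp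
  finally have lhs: "cmp C (mtens C h (idm C ?D)) (coev C V) = msmult C s (coev C V)" .
  have T1: "mtens C (idm C V) (mtens C (ev C V) (idm C ?D)) \<in> Hom C (otens C V (otens C ?D (otens C V ?D))) ?X"
    using tens_hom[OF IV tens_hom[OF ev ID]] by (simp add: simps)
  have T2: "mtens C f (idm C ?X) \<in> Hom C ?X (otens C V (otens C ?D (otens C V ?D)))"
    using tens_hom[OF f IX] by (simp add: simps)
  have T3: "mtens C (idm C ?X) (coev C V) \<in> Hom C ?X (otens C V (otens C ?D (otens C V ?D)))"
    using tens_hom[OF IX co] by (simp add: simps)
  have P: "mtens C (idm C ?D) (coev C V) \<in> Hom C ?D (otens C ?D ?X)"
    using tens_hom[OF ID co] by (simp add: simps)
  have Q: "mtens C (ev C V) (idm C ?D) \<in> Hom C (otens C ?D ?X) ?D"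
    using tens_hom[OF ev ID] by (simp add: simps)
  have h1: "mtens C h (idm C ?D) = cmp C (mtens C (idm C V) (mtens C (ev C V) (idm C ?D))) (mtens C f (idm C ?X))"
  proof -
    have "mtens C h (idm C ?D) = mtens C h (cmp C (idm C ?D) (idm C ?D))" using id_l[OF ID] by simp
    also have "\<dots> = cmp C (mtens C (mtens C (idm C V) (ev C V)) (idm C ?D)) (mtens C (mtens C f (idm C V)) (idm C ?D))"
      unfolding h_def by (rule interchange[OF B A ID ID])
    also have "\<dots> = cmp C (mtens C (idm C V) (mtens C (ev C V) (idm C ?D))) (mtens C f (idm C ?X))"
      using mtens_assoc[OF IV ev ID] mtens_assoc[OF f IV ID] tens_id[OF VO DO] by simp
    finally show ?thesis .
  qed
  have h4: "cmp C (mtens C f (idm C ?X)) (coev C V) = cmp C (mtens C (idm C ?X) (coev C V)) f"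
  proof -
    have "cmp C (mtens C f (idm C ?X)) (coev C V) = cmp C (mtens C f (idm C ?X)) (mtens C (idm C ?U) (coev C V))"
      using mtens_unit_l[OF co] by simp
    also have "\<dots> = mtens C (cmp C f (idm C ?U)) (cmp C (idm C ?X) (coev C V))"
      using interchange[OF IU f co IX] by simp
    also have "\<dots> = mtens C (cmp C (idm C ?X) f) (cmp C (coev C V) (idm C ?U))"
      using id_l[OF co] id_r[OF co] id_l[OF f] id_r[OF f] by simp
    also have "\<dots> = cmp C (mtens C (idm C ?X) (coev C V)) (mtens C f (idm C ?U))"
      using interchange[OF f IX IU co] by simp
    also have "\<dots> = cmp C (mtens C (idm C ?X) (coev C V)) f" using mtens_unit_r[OF f] by simp
    finally show ?thesis .
  qed
  have h6: "cmp C (mtens C (idm C V) (mtens C (ev C V) (idm C ?D))) (mtens C (idm C ?X) (coev C V)) = idm C ?X"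
  proof -
    have "mtens C (idm C ?X) (coev C V) = mtens C (idm C V) (mtens C (idm C ?D) (coev C V))"
      using tens_id[OF VO DO] mtens_assoc[OF IV ID co] by metis
    moreover have "cmp C (mtens C (idm C V) (mtens C (ev C V) (idm C ?D))) (mtens C (idm C V) (mtens C (idm C ?D) (coev C V)))
        = mtens C (cmp C (idm C V) (idm C V)) (cmp C (mtens C (ev C V) (idm C ?D)) (mtens C (idm C ?D) (coev C V)))"
      using interchange[OF IV IV P Q] by simp
    moreover have "\<dots> = idm C ?X" using id_l[OF IV] zz2[OF VO] tens_id[OF VO DO] by simp
    ultimately show ?thesis by simp
  qed
  have "cmp C (mtens C h (idm C ?D)) (coev C V)
      = cmp C (mtens C (idm C V) (mtens C (ev C V) (idm C ?D))) (cmp C (mtens C f (idm C ?X)) (coev C V))"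
    using h1 assoc[OF co T2 T1] by simp
  also have "\<dots> = cmp C (mtens C (idm C V) (mtens C (ev C V) (idm C ?D))) (cmp C (mtens C (idm C ?X) (coev C V)) f)"
    using h4 by simp
  also have "\<dots> = f" using assoc[OF f T3 T1] h6 id_l[OF f] by simp
  finally show ?thesis using lhs by metis
qed


lemma comp_addr: "f \<in> Hom C a b \<Longrightarrow> f' \<in> Hom C a b \<Longrightarrow> g \<in> Hom C b c \<Longrightarrow>
   cmp C g (madd C f f') = madd C (cmp C g f) (cmp C g f')" using lin2' by blast

lemma evt_rep: assumes V: "abs_simple C V"
  and g: "g \<in> Hom C (otens C V (dual C V)) (unit C)"
  shows "\<exists>s. g = msmult C s (evt C V)"
proof -
  let ?D = "dual C V" let ?X = "otens C V (dual C V)" let ?U = "unit C"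
  have VO: "V \<in> Obj C" using absV_obj[OF V] .
  have DO: "?D \<in> Obj C" using dual_obj[OF VO] .
  have UO: "?U \<in> Obj C" by (rule unit_obj)
  have XO: "?X \<in> Obj C" using otens_obj[OF VO DO] .
  have IV: "idm C V \<in> Hom C V V" using id_hom[OF VO] .
  have ID: "idm C ?D \<in> Hom C ?D ?D" using id_hom[OF DO] .
  have IX: "idm C ?X \<in> Hom C ?X ?X" using id_hom[OF XO] .
  have IU: "idm C ?U \<in> Hom C ?U ?U" using id_hom[OF UO] .
  have co: "coevt C V \<in> Hom C ?U (otens C ?D V)" using coevt_hom[OF VO] .
  have ev: "evt C V \<in> Hom C ?X ?U" using evt_hom[OF VO] .
  note simps = otens_assoc otens_unit_l otens_unit_r VO DO UO XO otens_obj
  have A: "mtens C g (idm C V) \<in> Hom C (otens C V (otens C ?D V)) V"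
    using tens_hom[OF g IV] by (simp add: simps)
  have B: "mtens C (idm C V) (coevt C V) \<in> Hom C V (otens C V (otens C ?D V))"
    using tens_hom[OF IV co] by (simp add: simps)
  define h where "h = cmp C (mtens C g (idm C V)) (mtens C (idm C V) (coevt C V))"
  have h: "h \<in> Hom C V V" unfolding h_def using comp_hom[OF B A] .
  obtain s where s: "h = msmult C s (idm C V)" using absV_surj[OF V h] by blast
  have "cmp C (evt C V) (mtens C h (idm C ?D)) = cmp C (evt C V) (mtens C (msmult C s (idm C V)) (idm C ?D))"
    using s by simp
  also have "\<dots> = cmp C (evt C V) (msmult C s (idm C ?X))"
    using tens_smultl[OF IV ID] tens_id[OF VO DO] by simp
  also have "\<dots> = msmult C s (evt C V)"
    using comp_smultr[OF IX ev] id_r[OF ev] by simp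
  finally have lhs: "cmp C (evt C V) (mtens C h (idm C ?D)) = msmult C s (evt C V)" .
  have R: "mtens C (idm C V) (mtens C (coevt C V) (idm C ?D)) \<in> Hom C ?X (otens C V (otens C ?D (otens C V ?D)))"
    using tens_hom[OF IV tens_hom[OF co ID]] by (simp add: simps)
  have T2: "mtens C g (idm C ?X) \<in> Hom C (otens C V (otens C ?D (otens C V ?D))) ?X"
    using tens_hom[OF g IX] by (simp add: simps)
  have T3: "mtens C (idm C ?X) (evt C V) \<in> Hom C (otens C V (otens C ?D (otens C V ?D))) ?X"
    using tens_hom[OF IX ev] by (simp add: simps)
  have P: "mtens C (coevt C V) (idm C ?D) \<in> Hom C ?D (otens C ?D ?X)"
    using tens_hom[OF co ID] by (simp add: simps)
  have Q: "mtens C (idm C ?D) (evt C V) \<in> Hom C (otens C ?D ?X) ?D"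
    using tens_hom[OF ID ev] by (simp add: simps)
  have h1: "mtens C h (idm C ?D) = cmp C (mtens C g (idm C ?X)) (mtens C (idm C V) (mtens C (coevt C V) (idm C ?D)))"
  proof -
    have "mtens C h (idm C ?D) = mtens C h (cmp C (idm C ?D) (idm C ?D))" using id_l[OF ID] by simp
    also have "\<dots> = cmp C (mtens C (mtens C g (idm C V)) (idm C ?D)) (mtens C (mtens C (idm C V) (coevt C V)) (idm C ?D))"
      unfolding h_def by (rule interchange[OF B A ID ID])
    also have "\<dots> = cmp C (mtens C g (idm C ?X)) (mtens C (idm C V) (mtens C (coevt C V) (idm C ?D)))"
      using mtens_assoc[OF g IV ID] mtens_assoc[OF IV co ID] tens_id[OF VO DO] by simp
    finally show ?thesis .
  qed
  have h4: "cmp C (evt C V) (mtens C g (idm C ?X)) = cmp C g (mtens C (idm C ?X) (evt C V))"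
  proof -
    have "cmp C (evt C V) (mtens C g (idm C ?X)) = cmp C (mtens C (idm C ?U) (evt C V)) (mtens C g (idm C ?X))"
      using mtens_unit_l[OF ev] by simp
    also have "\<dots> = mtens C (cmp C (idm C ?U) g) (cmp C (evt C V) (idm C ?X))"
      using interchange[OF g IU IX ev] by simp
    also have "\<dots> = mtens C (cmp C g (idm C ?X)) (cmp C (idm C ?U) (evt C V))"
      using id_l[OF ev] id_r[OF ev] id_l[OF g] id_r[OF g] by simp
    also have "\<dots> = cmp C (mtens C g (idm C ?U)) (mtens C (idm C ?X) (evt C V))"
      using interchange[OF IX g ev IU] by simp
    also have "\<dots> = cmp C g (mtens C (idm C ?X) (evt C V))" using mtens_unit_r[OF g] by simp
    finally show ?thesis .
  qed
  have h6: "cmp C (mtens C (idm C ?X) (evt C V)) (mtens C (idm C V) (mtens C (coevt C V) (idm C ?D))) = idm C ?X"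
  proof -
    have "mtens C (idm C ?X) (evt C V) = mtens C (idm C V) (mtens C (idm C ?D) (evt C V))"
      using tens_id[OF VO DO] mtens_assoc[OF IV ID ev] by metis
    moreover have "cmp C (mtens C (idm C V) (mtens C (idm C ?D) (evt C V))) (mtens C (idm C V) (mtens C (coevt C V) (idm C ?D)))
        = mtens C (cmp C (idm C V) (idm C V)) (cmp C (mtens C (idm C ?D) (evt C V)) (mtens C (coevt C V) (idm C ?D)))"
      using interchange[OF IV IV P Q] by simp
    moreover have "\<dots> = idm C ?X" using id_l[OF IV] zzt2[OF VO] tens_id[OF VO DO] by simp
    ultimately show ?thesis by simp
  qed
  have "cmp C (evt C V) (mtens C h (idm C ?D))
      = cmp C (cmp C (evt C V) (mtens C g (idm C ?X))) (mtens C (idm C V) (mtens C (coevt C V) (idm C ?D)))"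
    using h1 assoc[OF R T2 ev] by simp
  also have "\<dots> = cmp C (cmp C g (mtens C (idm C ?X) (evt C V))) (mtens C (idm C V) (mtens C (coevt C V) (idm C ?D)))"
    using h4 by simp
  also have "\<dots> = g" using assoc[OF R T3 g] h6 id_r[OF g] by simp
  finally show ?thesis using lhs by metis
qed

lemma coev_nz: assumes V: "abs_simple C V" shows "coev C V \<noteq> msmult C 0 (coev C V)"
proof
  assume a: "coev C V = msmult C 0 (coev C V)"
  let ?D = "dual C V"
  have VO: "V \<in> Obj C" using absV_obj[OF V] .
  have DO: "?D \<in> Obj C" using dual_obj[OF VO] .
  have IV: "idm C V \<in> Hom C V V" using id_hom[OF VO] .
  have ev: "ev C V \<in> Hom C (otens C ?D V) (unit C)" using ev_hom[OF VO] .
  have co: "coev C V \<in> Hom C (unit C) (otens C V ?D)" using coev_hom[OF VO] .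
  note simps = otens_assoc otens_unit_l otens_unit_r VO DO unit_obj otens_obj
  have A: "mtens C (idm C V) (ev C V) \<in> Hom C (otens C V (otens C ?D V)) V"
    using tens_hom[OF IV ev] by (simp add: simps)
  have B: "mtens C (coev C V) (idm C V) \<in> Hom C V (otens C V (otens C ?D V))"
    using tens_hom[OF co IV] by (simp add: simps)
  have "idm C V = cmp C (mtens C (idm C V) (ev C V)) (mtens C (msmult C 0 (coev C V)) (idm C V))"
    using zz1[OF VO] a by simp
  also have "\<dots> = msmult C 0 (idm C V)"
    using tens_smultl[OF co IV] comp_smultr[OF B A] zz1[OF VO] by simp
  finally show False using absV_nz[OF V] by simp
qed

lemma evt_nz: assumes V: "abs_simple C V" shows "evt C V \<noteq> msmult C 0 (evt C V)"
proof
  assume a: "evt C V = msmult C 0 (evt C V)"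
  let ?D = "dual C V"
  have VO: "V \<in> Obj C" using absV_obj[OF V] .
  have DO: "?D \<in> Obj C" using dual_obj[OF VO] .
  have IV: "idm C V \<in> Hom C V V" using id_hom[OF VO] .
  have ev: "evt C V \<in> Hom C (otens C V ?D) (unit C)" using evt_hom[OF VO] .
  have co: "coevt C V \<in> Hom C (unit C) (otens C ?D V)" using coevt_hom[OF VO] .
  note simps = otens_assoc otens_unit_l otens_unit_r VO DO unit_obj otens_obj
  have A: "mtens C (evt C V) (idm C V) \<in> Hom C (otens C V (otens C ?D V)) V"
    using tens_hom[OF ev IV] by (simp add: simps)
  have B: "mtens C (idm C V) (coevt C V) \<in> Hom C V (otens C V (otens C ?D V))"
    using tens_hom[OF IV co] by (simp add: simps)
  have "idm C V = cmp C (mtens C (msmult C 0 (evt C V)) (idm C V)) (mtens C (idm C V) (coevt C V))"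
    using zzt1[OF VO] a by simp
  also have "\<dots> = msmult C 0 (idm C V)"
    using tens_smultl[OF ev IV] comp_smultl[OF B A] zzt1[OF VO] by simp
  finally show False using absV_nz[OF V] by simp
qed

end


context apk begin

lemma gen_left:
  assumes c: "c \<in> Hom C U X" and cnz: "c \<noteq> msmult C 0 c"
    and rep: "\<forall>f\<in>Hom C U X. \<exists>s. f = msmult C s c"
    and ip: "\<forall>k < n. i k \<in> Hom C (W k) X \<and> p k \<in> Hom C X (W k) \<and> cmp C (p k) (i k) = idm C (W k)"
    and orth: "\<forall>k < n. \<forall>l < n. k \<noteq> l \<longrightarrow> cmp C (cmp C (i k) (p k)) (cmp C (i l) (p l)) = mzero C X X"
    and total: "hsum C X X (\<lambda>k. cmp C (i k) (p k)) n = idm C X"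
  shows "(\<forall>j < n. cmp C (cmp C (i j) (p j)) c = c \<longleftrightarrow>
              (Hom C U (W j) \<noteq> {mzero C U (W j)} \<and>
               Hom C U (W j) = {msmult C s (cmp C (p j) c) | s. True})) \<and>
         (\<exists>!j. j < n \<and> cmp C (cmp C (i j) (p j)) c = c)"
proof -
  have UO: "U \<in> Obj C" and XO: "X \<in> Obj C" using hom_obj[OF c] by auto
  have IX: "idm C X \<in> Hom C X X" using id_hom[OF XO] .
  have z: "msmult C 0 c = mzero C U X" using smult_zero[OF c] .
  have zX: "msmult C 0 (idm C X) = mzero C X X" using smult_zero[OF IX] .
  have zc: "cmp C (mzero C X X) c = mzero C U X"
    using zX[symmetric] comp_smultl[OF c IX] id_l[OF c] z by simp
  have ik: "i k \<in> Hom C (W k) X" and pk: "p k \<in> Hom C X (W k)" and pi: "cmp C (p k) (i k) = idm C (W k)"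
    if "k < n" for k using ip that by auto
  have ek: "cmp C (i k) (p k) \<in> Hom C X X" if "k < n" for k using comp_hom[OF pk[OF that] ik[OF that]] .
  have idem: "cmp C (cmp C (i k) (p k)) (cmp C (i k) (p k)) = cmp C (i k) (p k)" if k: "k < n" for k
  proof -
    have "cmp C (cmp C (i k) (p k)) (cmp C (i k) (p k)) = cmp C (i k) (cmp C (p k) (cmp C (i k) (p k)))"
      using assoc[OF ek[OF k] pk[OF k] ik[OF k]] by simp
    also have "cmp C (p k) (cmp C (i k) (p k)) = p k"
      using assoc[OF pk[OF k] ik[OF k] pk[OF k]] pi[OF k] id_l[OF pk[OF k]] by simp
    finally show ?thesis by simp
  qed
  have dich: "cmp C (cmp C (i k) (p k)) c = c \<or> cmp C (cmp C (i k) (p k)) c = mzero C U X" if k: "k < n" for k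
  proof -
    have ec: "cmp C (cmp C (i k) (p k)) c \<in> Hom C U X" using comp_hom[OF c ek[OF k]] .
    obtain t where t: "cmp C (cmp C (i k) (p k)) c = msmult C t c" using rep ec by blast
    have "msmult C (t * t) c = msmult C t (cmp C (cmp C (i k) (p k)) c)"
      using t smult_mult[OF c] by simp
    also have "\<dots> = cmp C (cmp C (i k) (p k)) (cmp C (cmp C (i k) (p k)) c)"
      using t comp_smultr[OF c ek[OF k]] by simp
    also have "\<dots> = cmp C (cmp C (i k) (p k)) c"
      using assoc[OF c ek[OF k] ek[OF k]] idem[OF k] by simp
    also have "\<dots> = msmult C t c" using t .
    finally have "t * t = t" using smult_inj[OF c cnz] by blast
    then have "t = 0 \<or> t = 1"
      by (metis mult_cancel_left1 mult_zero_left)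
    then show ?thesis using t smult_one[OF c] z by auto
  qed
  have part1: "cmp C (cmp C (i j) (p j)) c = c \<longleftrightarrow>
              (Hom C U (W j) \<noteq> {mzero C U (W j)} \<and>
               Hom C U (W j) = {msmult C s (cmp C (p j) c) | s. True})" if j: "j < n" for j
  proof -
    have pc: "cmp C (p j) c \<in> Hom C U (W j)" using comp_hom[OF c pk[OF j]] .
    have WO: "W j \<in> Obj C" using hom_obj[OF pc] by auto
    have zW: "msmult C 0 (cmp C (p j) c) = mzero C U (W j)" using smult_zero[OF pc] .
    have ipc: "cmp C (i j) (cmp C (p j) c) = cmp C (cmp C (i j) (p j)) c"
      using assoc[OF c pk[OF j] ik[OF j]] .
    show ?thesis
    proof
      assume e: "cmp C (cmp C (i j) (p j)) c = c"
      have nz: "cmp C (p j) c \<noteq> mzero C U (W j)"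
      proof
        assume a: "cmp C (p j) c = mzero C U (W j)"
        have "c = cmp C (i j) (msmult C 0 (cmp C (p j) c))" using e ipc a zW by simp
        also have "\<dots> = msmult C 0 c" using comp_smultr[OF pc ik[OF j]] ipc e by simp
        finally show False using cnz by simp
      qed
      have sub: "Hom C U (W j) \<subseteq> {msmult C s (cmp C (p j) c) | s. True}"
      proof
        fix g assume g: "g \<in> Hom C U (W j)"
        have ig: "cmp C (i j) g \<in> Hom C U X" using comp_hom[OF g ik[OF j]] .
        obtain s where s: "cmp C (i j) g = msmult C s c" using rep ig by blast
        have "g = cmp C (cmp C (p j) (i j)) g" using pi[OF j] id_l[OF g] by simp
        also have "\<dots> = cmp C (p j) (cmp C (i j) g)" using assoc[OF g ik[OF j] pk[OF j]] by simp
        also have "\<dots> = msmult C s (cmp C (p j) c)" using s comp_smultr[OF c pk[OF j]] by simp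
        finally show "g \<in> {msmult C s (cmp C (p j) c) | s. True}" by blast
      qed
      have sup: "{msmult C s (cmp C (p j) c) | s. True} \<subseteq> Hom C U (W j)"
        using smult_hom[OF pc] by blast
      show "Hom C U (W j) \<noteq> {mzero C U (W j)} \<and> Hom C U (W j) = {msmult C s (cmp C (p j) c) | s. True}"
        using nz pc sub sup by blast
    next
      assume h: "Hom C U (W j) \<noteq> {mzero C U (W j)} \<and> Hom C U (W j) = {msmult C s (cmp C (p j) c) | s. True}"
      show "cmp C (cmp C (i j) (p j)) c = c"
      proof (rule ccontr)
        assume "cmp C (cmp C (i j) (p j)) c \<noteq> c"
        then have e0: "cmp C (cmp C (i j) (p j)) c = msmult C 0 c" using dich[OF j] z by simp
        have "cmp C (p j) c = cmp C (cmp C (p j) (i j)) (cmp C (p j) c)" using pi[OF j] id_l[OF pc] by simp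
        also have "\<dots> = cmp C (p j) (cmp C (i j) (cmp C (p j) c))" using assoc[OF pc ik[OF j] pk[OF j]] by simp
        also have "\<dots> = msmult C 0 (cmp C (p j) c)" using ipc e0 comp_smultr[OF c pk[OF j]] by simp
        finally have pc0: "cmp C (p j) c = msmult C 0 (cmp C (p j) c)" .
        have "Hom C U (W j) \<subseteq> {mzero C U (W j)}"
        proof
          fix x assume "x \<in> Hom C U (W j)"
          then obtain s where "x = msmult C s (cmp C (p j) c)" using h by blast
          also have "\<dots> = msmult C (s * 0) (cmp C (p j) c)" using pc0 smult_mult[OF pc] by metis
          also have "\<dots> = mzero C U (W j)" using zW by simp
          finally show "x \<in> {mzero C U (W j)}" by simp
        qed
        then show False using h zero_hom[OF UO WO] by blast
      qed
    qed
  qed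
  have uniq: "k = l" if k: "k < n" and l: "l < n" and ek1: "cmp C (cmp C (i k) (p k)) c = c"
    and el1: "cmp C (cmp C (i l) (p l)) c = c" for k l
  proof (rule ccontr)
    assume kl: "k \<noteq> l"
    have "c = cmp C (cmp C (i k) (p k)) (cmp C (cmp C (i l) (p l)) c)" using ek1 el1 by simp
    also have "\<dots> = cmp C (mzero C X X) c" using assoc[OF c ek[OF l] ek[OF k]] orth k l kl by simp
    finally show False using zc z cnz by simp
  qed
  have ex: "\<exists>j. j < n \<and> cmp C (cmp C (i j) (p j)) c = c"
  proof (rule ccontr)
    assume "\<not> ?thesis"
    then have all0: "cmp C (cmp C (i k) (p k)) c = mzero C U X" if "k < n" for k using dich that by blast
    have "m \<le> n \<longrightarrow> hsum C X X (\<lambda>k. cmp C (i k) (p k)) m \<in> Hom C X X \<and>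
                  cmp C (hsum C X X (\<lambda>k. cmp C (i k) (p k)) m) c = mzero C U X" for m
    proof (induction m)
      case 0
      then show ?case using zero_hom[OF XO XO] zc by simp
    next
      case (Suc m)
      show ?case
      proof
        assume m: "Suc m \<le> n"
        then have H: "hsum C X X (\<lambda>k. cmp C (i k) (p k)) m \<in> Hom C X X"
          and Hc: "cmp C (hsum C X X (\<lambda>k. cmp C (i k) (p k)) m) c = mzero C U X" using Suc by auto
        have em: "cmp C (i m) (p m) \<in> Hom C X X" using ek m by simp
        have "cmp C (hsum C X X (\<lambda>k. cmp C (i k) (p k)) (Suc m)) c = madd C (mzero C U X) (mzero C U X)"
          using comp_addl[OF c H em] Hc all0[of m] m by simp
        also have "\<dots> = mzero C U X" using add_zero[OF zero_hom[OF UO XO]] .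
        finally show "hsum C X X (\<lambda>k. cmp C (i k) (p k)) (Suc m) \<in> Hom C X X \<and>
                  cmp C (hsum C X X (\<lambda>k. cmp C (i k) (p k)) (Suc m)) c = mzero C U X"
          using add_hom[OF H em] by simp
      qed
    qed
    then have "cmp C (hsum C X X (\<lambda>k. cmp C (i k) (p k)) n) c = mzero C U X" by blast
    then have "cmp C (idm C X) c = mzero C U X" using total by simp
    then show False using id_l[OF c] z cnz by simp
  qed
  show ?thesis using part1 uniq ex by blast
qed


lemma gen_right:
  assumes c: "c \<in> Hom C X U" and cnz: "c \<noteq> msmult C 0 c"
    and rep: "\<forall>f\<in>Hom C X U. \<exists>s. f = msmult C s c"
    and ip: "\<forall>k < n. i k \<in> Hom C (W k) X \<and> p k \<in> Hom C X (W k) \<and> cmp C (p k) (i k) = idm C (W k)"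
    and orth: "\<forall>k < n. \<forall>l < n. k \<noteq> l \<longrightarrow> cmp C (cmp C (i k) (p k)) (cmp C (i l) (p l)) = mzero C X X"
    and total: "hsum C X X (\<lambda>k. cmp C (i k) (p k)) n = idm C X"
  shows "(\<forall>j < n. cmp C c (cmp C (i j) (p j)) = c \<longleftrightarrow>
              (Hom C (W j) U \<noteq> {mzero C (W j) U} \<and>
               Hom C (W j) U = {msmult C s (cmp C c (i j)) | s. True})) \<and>
         (\<exists>!j. j < n \<and> cmp C c (cmp C (i j) (p j)) = c)"
proof -
  have UO: "U \<in> Obj C" and XO: "X \<in> Obj C" using hom_obj[OF c] by auto
  have IX: "idm C X \<in> Hom C X X" using id_hom[OF XO] .
  have z: "msmult C 0 c = mzero C X U" using smult_zero[OF c] .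
  have zX: "msmult C 0 (idm C X) = mzero C X X" using smult_zero[OF IX] .
  have zc: "cmp C c (mzero C X X) = mzero C X U"
    using zX[symmetric] comp_smultr[OF IX c] id_r[OF c] z by simp
  have ik: "i k \<in> Hom C (W k) X" and pk: "p k \<in> Hom C X (W k)" and pi: "cmp C (p k) (i k) = idm C (W k)"
    if "k < n" for k using ip that by auto
  have ek: "cmp C (i k) (p k) \<in> Hom C X X" if "k < n" for k using comp_hom[OF pk[OF that] ik[OF that]] .
  have idem: "cmp C (cmp C (i k) (p k)) (cmp C (i k) (p k)) = cmp C (i k) (p k)" if k: "k < n" for k
  proof -
    have "cmp C (cmp C (i k) (p k)) (cmp C (i k) (p k)) = cmp C (i k) (cmp C (p k) (cmp C (i k) (p k)))"
      using assoc[OF ek[OF k] pk[OF k] ik[OF k]] by simp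
    also have "cmp C (p k) (cmp C (i k) (p k)) = p k"
      using assoc[OF pk[OF k] ik[OF k] pk[OF k]] pi[OF k] id_l[OF pk[OF k]] by simp
    finally show ?thesis by simp
  qed
  have dich: "cmp C c (cmp C (i k) (p k)) = c \<or> cmp C c (cmp C (i k) (p k)) = mzero C X U" if k: "k < n" for k
  proof -
    have ec: "cmp C c (cmp C (i k) (p k)) \<in> Hom C X U" using comp_hom[OF ek[OF k] c] .
    obtain t where t: "cmp C c (cmp C (i k) (p k)) = msmult C t c" using rep ec by blast
    have "msmult C (t * t) c = msmult C t (cmp C c (cmp C (i k) (p k)))"
      using t smult_mult[OF c] by simp
    also have "\<dots> = cmp C (cmp C c (cmp C (i k) (p k))) (cmp C (i k) (p k))"
      using t comp_smultl[OF ek[OF k] c] by simp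
    also have "\<dots> = cmp C c (cmp C (i k) (p k))"
      using assoc[OF ek[OF k] ek[OF k] c] idem[OF k] by simp
    also have "\<dots> = msmult C t c" using t .
    finally have "t * t = t" using smult_inj[OF c cnz] by blast
    then have "t = 0 \<or> t = 1"
      by (metis mult_cancel_left1 mult_zero_left)
    then show ?thesis using t smult_one[OF c] z by auto
  qed
  have part1: "cmp C c (cmp C (i j) (p j)) = c \<longleftrightarrow>
              (Hom C (W j) U \<noteq> {mzero C (W j) U} \<and>
               Hom C (W j) U = {msmult C s (cmp C c (i j)) | s. True})" if j: "j < n" for j
  proof -
    have pc: "cmp C c (i j) \<in> Hom C (W j) U" using comp_hom[OF ik[OF j] c] .
    have WO: "W j \<in> Obj C" using hom_obj[OF pc] by auto
    have zW: "msmult C 0 (cmp C c (i j)) = mzero C (W j) U" using smult_zero[OF pc] .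
    have ipc: "cmp C (cmp C c (i j)) (p j) = cmp C c (cmp C (i j) (p j))"
      using assoc[OF pk[OF j] ik[OF j] c] by simp
    show ?thesis
    proof
      assume e: "cmp C c (cmp C (i j) (p j)) = c"
      have nz: "cmp C c (i j) \<noteq> mzero C (W j) U"
      proof
        assume a: "cmp C c (i j) = mzero C (W j) U"
        have "c = cmp C (msmult C 0 (cmp C c (i j))) (p j)" using e ipc a zW by simp
        also have "\<dots> = msmult C 0 c" using comp_smultl[OF pk[OF j] pc] ipc e by simp
        finally show False using cnz by simp
      qed
      have sub: "Hom C (W j) U \<subseteq> {msmult C s (cmp C c (i j)) | s. True}"
      proof
        fix g assume g: "g \<in> Hom C (W j) U"
        have ig: "cmp C g (p j) \<in> Hom C X U" using comp_hom[OF pk[OF j] g] .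
        obtain s where s: "cmp C g (p j) = msmult C s c" using rep ig by blast
        have "g = cmp C g (cmp C (p j) (i j))" using pi[OF j] id_r[OF g] by simp
        also have "\<dots> = cmp C (cmp C g (p j)) (i j)" using assoc[OF ik[OF j] pk[OF j] g] by simp
        also have "\<dots> = msmult C s (cmp C c (i j))" using s comp_smultl[OF ik[OF j] c] by simp
        finally show "g \<in> {msmult C s (cmp C c (i j)) | s. True}" by blast
      qed
      have sup: "{msmult C s (cmp C c (i j)) | s. True} \<subseteq> Hom C (W j) U"
        using smult_hom[OF pc] by blast
      show "Hom C (W j) U \<noteq> {mzero C (W j) U} \<and> Hom C (W j) U = {msmult C s (cmp C c (i j)) | s. True}"
        using nz pc sub sup by blast
    next
      assume h: "Hom C (W j) U \<noteq> {mzero C (W j) U} \<and> Hom C (W j) U = {msmult C s (cmp C c (i j)) | s. True}"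
      show "cmp C c (cmp C (i j) (p j)) = c"
      proof (rule ccontr)
        assume "cmp C c (cmp C (i j) (p j)) \<noteq> c"
        then have e0: "cmp C c (cmp C (i j) (p j)) = msmult C 0 c" using dich[OF j] z by simp
        have "cmp C c (i j) = cmp C (cmp C c (i j)) (cmp C (p j) (i j))" using pi[OF j] id_r[OF pc] by simp
        also have "\<dots> = cmp C (cmp C (cmp C c (i j)) (p j)) (i j)" using assoc[OF ik[OF j] pk[OF j] pc] by simp
        also have "\<dots> = msmult C 0 (cmp C c (i j))" using ipc e0 comp_smultl[OF ik[OF j] c] by simp
        finally have pc0: "cmp C c (i j) = msmult C 0 (cmp C c (i j))" .
        have "Hom C (W j) U \<subseteq> {mzero C (W j) U}"
        proof
          fix x assume "x \<in> Hom C (W j) U"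
          then obtain s where "x = msmult C s (cmp C c (i j))" using h by blast
          also have "\<dots> = msmult C (s * 0) (cmp C c (i j))" using pc0 smult_mult[OF pc] by metis
          also have "\<dots> = mzero C (W j) U" using zW by simp
          finally show "x \<in> {mzero C (W j) U}" by simp
        qed
        then show False using h zero_hom[OF WO UO] by blast
      qed
    qed
  qed
  have uniq: "k = l" if k: "k < n" and l: "l < n" and ek1: "cmp C c (cmp C (i k) (p k)) = c"
    and el1: "cmp C c (cmp C (i l) (p l)) = c" for k l
  proof (rule ccontr)
    assume kl: "k \<noteq> l"
    have "c = cmp C (cmp C c (cmp C (i k) (p k))) (cmp C (i l) (p l))" using ek1 el1 by simp
    also have "\<dots> = cmp C c (mzero C X X)" using assoc[OF ek[OF l] ek[OF k] c] orth k l kl by simp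
    finally show False using zc z cnz by simp
  qed
  have ex: "\<exists>j. j < n \<and> cmp C c (cmp C (i j) (p j)) = c"
  proof (rule ccontr)
    assume "\<not> ?thesis"
    then have all0: "cmp C c (cmp C (i k) (p k)) = mzero C X U" if "k < n" for k using dich that by blast
    have "m \<le> n \<longrightarrow> hsum C X X (\<lambda>k. cmp C (i k) (p k)) m \<in> Hom C X X \<and>
                  cmp C c (hsum C X X (\<lambda>k. cmp C (i k) (p k)) m) = mzero C X U" for m
    proof (induction m)
      case 0
      then show ?case using zero_hom[OF XO XO] zc by simp
    next
      case (Suc m)
      show ?case
      proof
        assume m: "Suc m \<le> n"
        then have H: "hsum C X X (\<lambda>k. cmp C (i k) (p k)) m \<in> Hom C X X"
          and Hc: "cmp C c (hsum C X X (\<lambda>k. cmp C (i k) (p k)) m) = mzero C X U" using Suc by auto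
        have em: "cmp C (i m) (p m) \<in> Hom C X X" using ek m by simp
        have "cmp C c (hsum C X X (\<lambda>k. cmp C (i k) (p k)) (Suc m)) = madd C (mzero C X U) (mzero C X U)"
          using comp_addr[OF H em c] Hc all0[of m] m by simp
        also have "\<dots> = mzero C X U" using add_zero[OF zero_hom[OF XO UO]] .
        finally show "hsum C X X (\<lambda>k. cmp C (i k) (p k)) (Suc m) \<in> Hom C X X \<and>
                  cmp C c (hsum C X X (\<lambda>k. cmp C (i k) (p k)) (Suc m)) = mzero C X U"
          using add_hom[OF H em] by simp
      qed
    qed
    then have "cmp C c (hsum C X X (\<lambda>k. cmp C (i k) (p k)) n) = mzero C X U" by blast
    then have "cmp C c (idm C X) = mzero C X U" using total by simp
    then show False using id_r[OF c] z cnz by simp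
  qed
  show ?thesis using part1 uniq ex by blast
qed

end

theorem lemma3p1:
  fixes C :: "('o, 'm, 'k::field) pkcat"
    and V :: 'o and n :: nat
    and W :: "nat \<Rightarrow> 'o" and i p :: "nat \<Rightarrow> 'm"
  assumes cat: "additive_pivotal_kcat C"
    and indec_abs: "\<forall>X. indecomposable C X \<longrightarrow> abs_indecomposable C X"
    and rad_nil: "\<forall>X. indecomposable C X \<longrightarrow> (\<forall>f \<in> Rad C X. nilpotent_end C X f)"
    and V: "abs_simple C V"
    and W: "\<forall>k < n. W k \<in> Obj C \<and> indecomposable C (W k)"
    and ip: "\<forall>k < n. i k \<in> Hom C (W k) (otens C V (dual C V)) \<and>
                     p k \<in> Hom C (otens C V (dual C V)) (W k) \<and>
                     cmp C (p k) (i k) = idm C (W k)"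
    and orth: "\<forall>k < n. \<forall>l < n. k \<noteq> l \<longrightarrow>
                 cmp C (cmp C (i k) (p k)) (cmp C (i l) (p l))
                   = mzero C (otens C V (dual C V)) (otens C V (dual C V))"
    and total: "hsum C (otens C V (dual C V)) (otens C V (dual C V))
                   (\<lambda>k. cmp C (i k) (p k)) n = idm C (otens C V (dual C V))"
  shows "(\<forall>j < n. cmp C (cmp C (i j) (p j)) (coev C V) = coev C V \<longleftrightarrow>
              (Hom C (unit C) (W j) \<noteq> {mzero C (unit C) (W j)} \<and>
               Hom C (unit C) (W j) = {msmult C s (cmp C (p j) (coev C V)) | s. True})) \<and>
         (\<exists>!j. j < n \<and> cmp C (cmp C (i j) (p j)) (coev C V) = coev C V) \<and>
         (\<forall>j < n. cmp C (evt C V) (cmp C (i j) (p j)) = evt C V \<longleftrightarrow>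
              (Hom C (W j) (unit C) \<noteq> {mzero C (W j) (unit C)} \<and>
               Hom C (W j) (unit C) = {msmult C s (cmp C (evt C V) (i j)) | s. True})) \<and>
         (\<exists>!j. j < n \<and> cmp C (evt C V) (cmp C (i j) (p j)) = evt C V)"
proof -
  interpret apk C using cat by unfold_locales
  have VO: "V \<in> Obj C" using absV_obj[OF V] .
  have repL: "\<forall>f\<in>Hom C (unit C) (otens C V (dual C V)). \<exists>s. f = msmult C s (coev C V)"
    using coev_rep[OF V] by blast
  have repR: "\<forall>f\<in>Hom C (otens C V (dual C V)) (unit C). \<exists>s. f = msmult C s (evt C V)"
    using evt_rep[OF V] by blast
  have L: "(\<forall>j < n. cmp C (cmp C (i j) (p j)) (coev C V) = coev C V \<longleftrightarrow>
              (Hom C (unit C) (W j) \<noteq> {mzero C (unit C) (W j)} \<and>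
               Hom C (unit C) (W j) = {msmult C s (cmp C (p j) (coev C V)) | s. True})) \<and>
         (\<exists>!j. j < n \<and> cmp C (cmp C (i j) (p j)) (coev C V) = coev C V)"
    by (rule gen_left[OF coev_hom[OF VO] coev_nz[OF V] repL ip orth total])
  have R: "(\<forall>j < n. cmp C (evt C V) (cmp C (i j) (p j)) = evt C V \<longleftrightarrow>
              (Hom C (W j) (unit C) \<noteq> {mzero C (W j) (unit C)} \<and>
               Hom C (W j) (unit C) = {msmult C s (cmp C (evt C V) (i j)) | s. True})) \<and>
         (\<exists>!j. j < n \<and> cmp C (evt C V) (cmp C (i j) (p j)) = evt C V)"
    by (rule gen_right[OF evt_hom[OF VO] evt_nz[OF V] repR ip orth total])
  show ?thesis
  proof (intro conjI)
    show "\<exists>!j. j < n \<and> cmp C (cmp C (i j) (p j)) (coev C V) = coev C V" using L by (rule conjunct2)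
    show "\<exists>!j. j < n \<and> cmp C (evt C V) (cmp C (i j) (p j)) = evt C V" using R by (rule conjunct2)
  qed (use L R in blast)+
qed

end
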